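(* For every $x>0$, $$\left(\frac{\sqrt{x}+1}{2}\right)^2\ge S(\sqrt{x})\,\sqrt{x},$$ where $S$ is the Specht ratio.
   Context: The Specht ratio is $S(x)=\dfrac{x^{\frac{1}{x-1}}}{e\log x^{\frac{1}{x-1}}}$ for $x>0$, $x\neq 1$, and $S(1)=1$. *)

theory Defs
  imports Complex_Main
begin

definition specht_ratio :: "real \<Rightarrow> real" where
  "specht_ratio x =
     (if x = 1 then 1
      else (x powr (1 / (x - 1))) / (exp 1 * ln (x powr (1 / (x - 1)))))"

end

theory Submission
  imports Defs
begin

definition FI :: "real \<Rightarrow> real" where
  "FI t = ln ((1+t)/2)*(t-1) - t*ln t + (t-1)"

definition GL :: "real \<Rightarrow> real" where
  "GL t = ln t - 2*(t-1)/(t+1)"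

lemma FI_deriv:
  assumes "t > 0"
  shows "\<exists>y. DERIV FI t :> y \<and> y \<ge> 0"
proof -
  have d: "DERIV FI t :> (inverse ((1+t)/2) * (1/2) * (t-1) + ln ((1+t)/2) - (ln t + t * inverse t) + 1)"
    unfolding FI_def using assms
    by (auto intro!: derivative_eq_intros)
  have "ln (2*t/(1+t)) \<le> 2*t/(1+t) - 1"
    using assms by (intro ln_le_minus_one) auto
  moreover have "ln (2*t/(1+t)) = - ln ((1+t)/2) + ln t"
    using assms by (simp add: ln_div ln_mult)
  moreover have "inverse ((1+t)/2) * (1/2) * (t-1) = (t-1)/(1+t)"
    using assms by (simp add: field_simps)
  moreover have "2*t/(1+t) - 1 = (t-1)/(1+t)"
    using assms by (simp add: field_simps)
  ultimately have "(inverse ((1+t)/2) * (1/2) * (t-1) + ln ((1+t)/2) - (ln t + t * inverse t) + 1) \<ge> 0"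
    using assms by simp
  with d show ?thesis by blast
qed

lemma GL_deriv:
  assumes "t > 0"
  shows "\<exists>y. DERIV GL t :> y \<and> y \<ge> 0"
proof -
  have d: "DERIV GL t :> (inverse t - (2*(t+1) - 2*(t-1))/(t+1)^2)"
    unfolding GL_def using assms
    by (auto intro!: derivative_eq_intros simp: power2_eq_square field_simps)
  have "inverse t - (2*(t+1) - 2*(t-1))/(t+1)^2 = (t-1)^2/(t*(t+1)^2)"
  proof -
    have p: "(t+1)^2 > 0" "t > 0" using assms by auto
    have "inverse t - (2*(t+1) - 2*(t-1))/(t+1)^2 = ((t+1)^2 - 4*t)/(t*(t+1)^2)"
      using p by (simp add: divide_simps)
    also have "(t+1)^2 - 4*t = (t-1)^2" by (simp add: power2_eq_square algebra_simps)
    finally show ?thesis .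
  qed
  also have "\<dots> \<ge> 0" using assms by simp
  finally show ?thesis using d by blast
qed

lemma FI_sign:
  assumes "t > 0"
  shows "(t \<ge> 1 \<longrightarrow> FI t \<ge> 0) \<and> (t \<le> 1 \<longrightarrow> FI t \<le> 0)"
proof -
  have F1: "FI 1 = 0" by (simp add: FI_def)
  have a: "FI 1 \<le> FI t" if "t \<ge> 1"
    by (rule DERIV_nonneg_imp_nondecreasing[OF that]) (rule FI_deriv, simp)
  have b: "FI t \<le> FI 1" if "t \<le> 1"
    by (rule DERIV_nonneg_imp_nondecreasing[OF that]) (rule FI_deriv, use assms in simp)
  show ?thesis using a b F1 by auto
qed

lemma GL_sign:
  assumes "t > 0"
  shows "(t \<ge> 1 \<longrightarrow> GL t \<ge> 0) \<and> (t \<le> 1 \<longrightarrow> GL t \<le> 0)"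
proof -
  have F1: "GL 1 = 0" by (simp add: GL_def)
  have a: "GL 1 \<le> GL t" if "t \<ge> 1"
    by (rule DERIV_nonneg_imp_nondecreasing[OF that]) (rule GL_deriv, simp)
  have b: "GL t \<le> GL 1" if "t \<le> 1"
    by (rule DERIV_nonneg_imp_nondecreasing[OF that]) (rule GL_deriv, use assms in simp)
  show ?thesis using a b F1 by auto
qed

lemma main:
  fixes t :: real
  assumes t: "t > 0"
  shows "((t + 1) / 2) ^ 2 \<ge> specht_ratio t * t"
proof (cases "t = 1")
  case True then show ?thesis by (simp add: specht_ratio_def)
next
  case False
  define A where "A = (t+1)/2"
  define L where "L = (t-1)/ln t"
  define I where "I = t * t powr (1/(t-1)) / exp 1"
  have lnne: "ln t \<noteq> 0" using t False by simp
  have Apos: "A > 0" using t by (simp add: A_def)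
  have Lpos: "L > 0" using t False by (cases "t < 1") (auto simp: L_def divide_pos_neg divide_neg_neg)
  have Ipos: "I > 0" using t by (simp add: I_def)
  have S: "specht_ratio t * t = L * I"
    using t False lnne by (simp add: specht_ratio_def L_def I_def ln_powr field_simps)
  have LA: "L \<le> A"
  proof (cases "t < 1")
    case True
    then have "GL t \<le> 0" using GL_sign[OF t] by simp
    then have "ln t \<le> 2*(t-1)/(t+1)" by (simp add: GL_def)
    then have "ln t * (t+1) \<le> 2*(t-1)" using t by (simp add: field_simps)
    moreover have "ln t < 0" using True t by simp
    ultimately show ?thesis unfolding L_def A_def using t
      by (simp add: field_simps)
  next
    case False2: False
    then have gt: "t > 1" using False by simp
    then have "GL t \<ge> 0" using GL_sign[OF t] by simp
    then have "ln t \<ge> 2*(t-1)/(t+1)" by (simp add: GL_def)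
    then have "ln t * (t+1) \<ge> 2*(t-1)" using t by (simp add: field_simps)
    moreover have "ln t > 0" using gt by simp
    ultimately show ?thesis unfolding L_def A_def using t
      by (simp add: field_simps)
  qed
  have lnI: "ln I = ln t * t / (t-1) - 1"
    using t False by (simp add: I_def ln_mult ln_div ln_powr field_simps)
  have "ln I \<le> ln A"
  proof (cases "t < 1")
    case True
    then have "FI t \<le> 0" using FI_sign[OF t] by simp
    then have "ln A * (t-1) \<le> t * ln t - (t-1)" by (simp add: FI_def A_def add.commute)
    then have "ln A \<ge> (t * ln t - (t-1)) / (t-1)" using True
      by (simp add: field_simps)
    moreover have "(t * ln t - (t-1)) / (t-1) = ln t * t / (t-1) - 1" using True
      by (simp add: field_simps)
    ultimately show ?thesis using lnI by simp
  next
    case False2: False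
    then have gt: "t > 1" using False by simp
    then have "FI t \<ge> 0" using FI_sign[OF t] by simp
    then have "ln A * (t-1) \<ge> t * ln t - (t-1)" by (simp add: FI_def A_def add.commute)
    then have "ln A \<ge> (t * ln t - (t-1)) / (t-1)" using gt
      by (simp add: field_simps)
    moreover have "(t * ln t - (t-1)) / (t-1) = ln t * t / (t-1) - 1" using gt
      by (simp add: field_simps)
    ultimately show ?thesis using lnI by simp
  qed
  then have IA: "I \<le> A" using Ipos Apos by simp
  have "L * I \<le> A * A" using LA IA Lpos Ipos by (intro mult_mono) auto
  then show ?thesis using S by (simp add: A_def power2_eq_square)
qed

theorem proposition2p2:
  fixes x :: real
  assumes "x > 0"
  shows "((sqrt x + 1) / 2) ^ 2 \<ge> specht_ratio (sqrt x) * sqrt x"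
  using main assms by simp

end
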